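(* Let $(E,\|\cdot\|)$ be a real Banach space with metric $d(x,y)=\|x-y\|$, $I=[a,b]$ a closed real interval, $E_0=C(I,E)$ the space of continuous functions $I\to E$ with the supremum norm $\|\varphi\|_0=\sup_{t\in I}\|\varphi(t)\|$ and metric $D(\varphi,\xi)=\|\varphi-\xi\|_0$, and fix $c\in I$. Let $\mathcal{K}$ be the set of constant functions in $E_0$. Let $\alpha:E\times E\to[0,\infty)$, $\mathcal{T}:E_0\to E$ and $k\in[0,1)$ satisfy: (1) ($(\alpha,k)$-contractive) $\alpha(\varphi(c),\mathcal{T}\varphi)\,\alpha(\xi(c),\mathcal{T}\xi)\,d(\mathcal{T}\varphi,\mathcal{T}\xi)\le k\,D(\varphi,\xi)$ for all $\varphi,\xi\in E_0$; (2) ($\alpha$-admissible) for all $\varphi,\xi\in E_0$, $\alpha(\varphi(c),\xi(c))\ge1$ implies $\alpha(\mathcal{T}\varphi,\mathcal{T}\xi)\ge1$; (3) ($E_0$-closed) whenever $(\varphi_n)_{n\ge0}$ in $E_0$ and $\varphi\in E_0$ satisfy $\alpha(\varphi_n(c),\mathcal{T}\varphi_n)\ge1$ for all $n$ and $D(\varphi_n,\varphi)\to0$, then $\alpha(\varphi(c),\mathcal{T}\varphi)\ge1$; (4) ($E_0$-starting) there exists $\varphi_0\in E_0$ with $\alpha(\varphi_0(c),\mathcal{T}\varphi_0)\ge1$. Then: (i) there exists $\varphi_0\in\mathcal{K}$ with $\alpha(\varphi_0(c),\mathcal{T}\varphi_0)\ge1$; (ii) for every $\varphi_0\in\mathcal{K}$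 with $\alpha(\varphi_0(c),\mathcal{T}\varphi_0)\ge1$, the sequence $(\varphi_n)_{n\ge0}$ in $\mathcal{K}$ defined by $\varphi_{n+1}(c)=\mathcal{T}\varphi_n$ ($n\ge0$) $D$-converges to some $\varphi^*\in\mathcal{K}$ with $\mathcal{T}\varphi^*=\varphi^*(c)$ and $\alpha(\varphi^*(c),\mathcal{T}\varphi^* )\ge1$; (iii) there is exactly one $\varphi^*\in\mathcal{K}$ with $\mathcal{T}\varphi^*=\varphi^*(c)$ and $\alpha(\varphi^*(c),\mathcal{T}\varphi^* )\ge1$.
   Context: A point $\varphi\in E_0$ with $\mathcal{T}\varphi=\varphi(c)$ is called a PPF dependent fixed point of $\mathcal{T}$. Elements of $\mathcal{K}$ are determined by their value at $c$, so the sequence in (ii) is well defined. *)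

theory Defs
  imports "HOL-Analysis.Analysis"
begin

text \<open>E_0 = C([a,b],E), represented extensionally: continuous on [a,b], zero outside.\<close>
definition E0 :: "real \<Rightarrow> real \<Rightarrow> (real \<Rightarrow> 'e::real_normed_vector) set" where
  "E0 a b = {f. continuous_on {a..b} f \<and> (\<forall>t. t \<notin> {a..b} \<longrightarrow> f t = 0)}"

definition supD :: "real \<Rightarrow> real \<Rightarrow> (real \<Rightarrow> 'e::real_normed_vector) \<Rightarrow> (real \<Rightarrow> 'e) \<Rightarrow> real" where
  "supD a b f g = (SUP t\<in>{a..b}. norm (f t - g t))"

definition Kc :: "real \<Rightarrow> real \<Rightarrow> (real \<Rightarrow> 'e::real_normed_vector) set" where
  "Kc a b = {f \<in> E0 a b. \<exists>x. \<forall>t\<in>{a..b}. f t = x}"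

end

theory Submission
  imports Defs
begin

lemma geom_conv:
  fixes x :: "nat \<Rightarrow> 'e::banach"
  assumes k: "0 \<le> k" "k < 1"
    and step: "\<And>n. norm (x (Suc (Suc n)) - x (Suc n)) \<le> k * norm (x (Suc n) - x n)"
  shows "convergent x"
proof -
  define d where "d = norm (x 1 - x 0)"
  have b: "norm (x (Suc n) - x n) \<le> d * k ^ n" for n
  proof (induction n)
    case 0 then show ?case by (simp add: d_def)
  next
    case (Suc n)
    have "norm (x (Suc (Suc n)) - x (Suc n)) \<le> k * norm (x (Suc n) - x n)" by (rule step)
    also have "\<dots> \<le> k * (d * k ^ n)" using Suc k by (simp add: mult_left_mono)
    finally show ?case by (simp add: algebra_simps)
  qed
  have s1: "summable (\<lambda>n. d * k ^ n)" using k by (simp add: summable_geometric)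
  have s: "summable (\<lambda>n. x (Suc n) - x n)"
    apply (rule summable_norm_cancel)
    apply (rule summable_comparison_test[OF _ s1])
    using b by auto
  have "(\<lambda>n. \<Sum>i<n. x (Suc i) - x i) \<longlonglongrightarrow> suminf (\<lambda>n. x (Suc n) - x n)"
    using summable_LIMSEQ[OF s] .
  then have "(\<lambda>n. x n - x 0) \<longlonglongrightarrow> suminf (\<lambda>n. x (Suc n) - x n)"
    by (simp add: sum_lessThan_telescope)
  then have "(\<lambda>n. (x n - x 0) + x 0) \<longlonglongrightarrow> suminf (\<lambda>n. x (Suc n) - x n) + x 0"
    by (intro tendsto_intros)
  then show ?thesis by (auto simp: convergent_def)
qed

definition cst :: "real \<Rightarrow> real \<Rightarrow> 'e::real_normed_vector \<Rightarrow> real \<Rightarrow> 'e" where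
  "cst a b x = (\<lambda>t. if t \<in> {a..b} then x else 0)"

lemma cst_Kc: "cst a b x \<in> Kc a b"
proof -
  have "continuous_on {a..b} (cst a b x)"
    by (rule continuous_on_cong[THEN iffD2, OF refl, of _ _ "\<lambda>_. x"]) (auto simp: cst_def)
  then show ?thesis by (auto simp: Kc_def E0_def cst_def)
qed

lemma Kc_cst: "f \<in> Kc a b \<Longrightarrow> c \<in> {a..b} \<Longrightarrow> f = cst a b (f c)"
  unfolding Kc_def E0_def cst_def by (auto intro!: ext)

lemma Kc_E0: "f \<in> Kc a b \<Longrightarrow> f \<in> E0 a b" by (simp add: Kc_def)

lemma supD_Kc: assumes "f \<in> Kc a b" "g \<in> Kc a b" "c \<in> {a..b}"
  shows "supD a b f g = norm (f c - g c)"
proof -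
  have "supD a b f g = (SUP t\<in>{a..b}. norm (f c - g c))"
    unfolding supD_def
    apply (rule SUP_cong[OF refl])
    using Kc_cst[OF assms(1,3)] Kc_cst[OF assms(2,3)]
    by (metis cst_def)
  also have "\<dots> = norm (f c - g c)" using assms(3) by (auto intro: SUP_const)
  finally show ?thesis .
qed

lemma cst_c: "c \<in> {a..b} \<Longrightarrow> cst a b x c = x" by (simp add: cst_def)

theorem theorem6:
  fixes a b c k :: real
    and \<alpha> :: "'e::banach \<Rightarrow> 'e \<Rightarrow> real"
    and T :: "(real \<Rightarrow> 'e) \<Rightarrow> 'e"
  assumes ab: "a \<le> b"
    and c: "c \<in> {a..b}"
    and k: "0 \<le> k" "k < 1"
    and alpha_nonneg: "\<And>x y. \<alpha> x y \<ge> 0"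
    and contr: "\<And>\<phi> \<xi>. \<phi> \<in> E0 a b \<Longrightarrow> \<xi> \<in> E0 a b \<Longrightarrow>
        \<alpha> (\<phi> c) (T \<phi>) * \<alpha> (\<xi> c) (T \<xi>) * dist (T \<phi>) (T \<xi>) \<le> k * supD a b \<phi> \<xi>"
    and admissible: "\<And>\<phi> \<xi>. \<phi> \<in> E0 a b \<Longrightarrow> \<xi> \<in> E0 a b \<Longrightarrow>
        \<alpha> (\<phi> c) (\<xi> c) \<ge> 1 \<Longrightarrow> \<alpha> (T \<phi>) (T \<xi>) \<ge> 1"
    and closed: "\<And>\<phi>s \<phi>. (\<forall>n. \<phi>s n \<in> E0 a b) \<Longrightarrow> \<phi> \<in> E0 a b \<Longrightarrow>
        (\<forall>n. \<alpha> (\<phi>s n c) (T (\<phi>s n)) \<ge> 1) \<Longrightarrow>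
        (\<lambda>n. supD a b (\<phi>s n) \<phi>) \<longlonglongrightarrow> 0 \<Longrightarrow> \<alpha> (\<phi> c) (T \<phi>) \<ge> 1"
    and starting: "\<exists>\<phi>0 \<in> E0 a b. \<alpha> (\<phi>0 c) (T \<phi>0) \<ge> 1"
  shows "(\<exists>\<phi>0 \<in> Kc a b. \<alpha> (\<phi>0 c) (T \<phi>0) \<ge> 1)
    \<and> (\<forall>\<phi>0 \<in> Kc a b. \<alpha> (\<phi>0 c) (T \<phi>0) \<ge> 1 \<longrightarrow>
         (\<forall>\<phi>s. \<phi>s 0 = \<phi>0 \<and> (\<forall>n. \<phi>s n \<in> Kc a b \<and> \<phi>s (Suc n) c = T (\<phi>s n)) \<longrightarrow>
            (\<exists>\<phi>' \<in> Kc a b. (\<lambda>n. supD a b (\<phi>s n) \<phi>') \<longlonglongrightarrow> 0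
               \<and> T \<phi>' = \<phi>' c \<and> \<alpha> (\<phi>' c) (T \<phi>') \<ge> 1)))
    \<and> (\<exists>!\<phi>'. \<phi>' \<in> Kc a b \<and> T \<phi>' = \<phi>' c \<and> \<alpha> (\<phi>' c) (T \<phi>') \<ge> 1)"
proof -
  have cd: "dist (T \<phi>) (T \<xi>) \<le> k * supD a b \<phi> \<xi>"
    if "\<phi> \<in> E0 a b" "\<xi> \<in> E0 a b" "\<alpha> (\<phi> c) (T \<phi>) \<ge> 1" "\<alpha> (\<xi> c) (T \<xi>) \<ge> 1" for \<phi> \<xi>
  proof -
    have "1 \<le> \<alpha> (\<phi> c) (T \<phi>) * \<alpha> (\<xi> c) (T \<xi>)"
      using that(3,4) by (metis mult_mono mult_1_left zero_le_one order_trans)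
    then have "dist (T \<phi>) (T \<xi>) \<le> \<alpha> (\<phi> c) (T \<phi>) * \<alpha> (\<xi> c) (T \<xi>) * dist (T \<phi>) (T \<xi>)"
      by (metis mult_right_mono mult_1_left zero_le_dist)
    also have "\<dots> \<le> k * supD a b \<phi> \<xi>" by (rule contr[OF that(1,2)])
    finally show ?thesis .
  qed
  have P1: "\<exists>\<phi>0 \<in> Kc a b. \<alpha> (\<phi>0 c) (T \<phi>0) \<ge> 1"
  proof -
    obtain \<phi>0 where p: "\<phi>0 \<in> E0 a b" "\<alpha> (\<phi>0 c) (T \<phi>0) \<ge> 1" using starting by blast
    let ?\<psi> = "cst a b (T \<phi>0)"
    have "\<alpha> (T \<phi>0) (T ?\<psi>) \<ge> 1"
      using admissible[OF p(1) Kc_E0[OF cst_Kc]] p(2) by (simp add: cst_c[OF c])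
    moreover have "?\<psi> c = T \<phi>0" by (rule cst_c[OF c])
    ultimately have "\<alpha> (?\<psi> c) (T ?\<psi>) \<ge> 1" by simp
    then show ?thesis using cst_Kc[of a b "T \<phi>0"] by blast
  qed
  have P2: "\<forall>\<phi>0 \<in> Kc a b. \<alpha> (\<phi>0 c) (T \<phi>0) \<ge> 1 \<longrightarrow>
         (\<forall>\<phi>s. \<phi>s 0 = \<phi>0 \<and> (\<forall>n. \<phi>s n \<in> Kc a b \<and> \<phi>s (Suc n) c = T (\<phi>s n)) \<longrightarrow>
            (\<exists>\<phi>' \<in> Kc a b. (\<lambda>n. supD a b (\<phi>s n) \<phi>') \<longlonglongrightarrow> 0
               \<and> T \<phi>' = \<phi>' c \<and> \<alpha> (\<phi>' c) (T \<phi>') \<ge> 1))"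
  proof (intro ballI impI allI)
    fix \<phi>0 \<phi>s
    assume h0: "\<phi>0 \<in> Kc a b" "\<alpha> (\<phi>0 c) (T \<phi>0) \<ge> 1"
      and hs: "\<phi>s 0 = \<phi>0 \<and> (\<forall>n. \<phi>s n \<in> Kc a b \<and> \<phi>s (Suc n) c = T (\<phi>s n))"
    have K: "\<phi>s n \<in> Kc a b" for n using hs by blast
    have E: "\<phi>s n \<in> E0 a b" for n using K Kc_E0 by blast
    have S: "\<phi>s (Suc n) c = T (\<phi>s n)" for n using hs by blast
    have A: "\<alpha> (\<phi>s n c) (T (\<phi>s n)) \<ge> 1" for n
    proof (induction n)
      case 0 then show ?case using hs h0 by simp
    next
      case (Suc n)
      have "\<alpha> (T (\<phi>s n)) (T (\<phi>s (Suc n))) \<ge> 1"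
        using admissible[OF E E, of n "Suc n"] Suc S[of n] by simp
      then show ?case using S[of n] by simp
    qed
    define x where "x n = \<phi>s n c" for n
    have D: "supD a b (\<phi>s m) (\<phi>s n) = norm (x m - x n)" for m n
      using supD_Kc[OF K K c] x_def by simp
    have "convergent x"
    proof (rule geom_conv[OF k])
      fix n
      have "norm (x (Suc (Suc n)) - x (Suc n)) = dist (T (\<phi>s (Suc n))) (T (\<phi>s n))"
        by (simp add: x_def S dist_norm)
      also have "\<dots> \<le> k * supD a b (\<phi>s (Suc n)) (\<phi>s n)" by (rule cd[OF E E A A])
      finally show "norm (x (Suc (Suc n)) - x (Suc n)) \<le> k * norm (x (Suc n) - x n)"
        by (simp add: D)
    qed
    then obtain xs where xs: "x \<longlonglongrightarrow> xs" by (auto simp: convergent_def)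
    define \<psi> where "\<psi> = cst a b xs"
    have \<psi>K: "\<psi> \<in> Kc a b" by (simp add: \<psi>_def cst_Kc)
    have \<psi>c: "\<psi> c = xs" by (simp add: \<psi>_def cst_c[OF c])
    have Dn: "supD a b (\<phi>s n) \<psi> = norm (x n - xs)" for n
      using supD_Kc[OF K \<psi>K c] x_def \<psi>c by simp
    have conv: "(\<lambda>n. supD a b (\<phi>s n) \<psi>) \<longlonglongrightarrow> 0"
      unfolding Dn using xs by (simp add: LIM_zero_iff tendsto_norm_zero)
    have A\<psi>: "\<alpha> (\<psi> c) (T \<psi>) \<ge> 1"
      by (rule closed[OF allI[OF E] Kc_E0[OF \<psi>K] allI[OF A] conv])
    have "(\<lambda>n. dist (T (\<phi>s n)) (T \<psi>)) \<longlonglongrightarrow> 0"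
    proof (rule tendsto_sandwich[of "\<lambda>_. 0" _ _ "\<lambda>n. k * supD a b (\<phi>s n) \<psi>"])
      show "\<forall>\<^sub>F n in sequentially. 0 \<le> dist (T (\<phi>s n)) (T \<psi>)" by simp
      show "\<forall>\<^sub>F n in sequentially. dist (T (\<phi>s n)) (T \<psi>) \<le> k * supD a b (\<phi>s n) \<psi>"
        using cd[OF E Kc_E0[OF \<psi>K] A A\<psi>] by simp
      show "(\<lambda>n. k * supD a b (\<phi>s n) \<psi>) \<longlonglongrightarrow> 0"
        using tendsto_mult[OF tendsto_const conv, of k] by simp
    qed simp
    then have "(\<lambda>n. T (\<phi>s n)) \<longlonglongrightarrow> T \<psi>" using tendsto_dist_iff by blast
    moreover have "(\<lambda>n. T (\<phi>s n)) = (\<lambda>n. x (Suc n))" by (rule ext) (simp only: x_def S)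
    ultimately have "(\<lambda>n. x (Suc n)) \<longlonglongrightarrow> T \<psi>" by simp
    moreover have "(\<lambda>n. x (Suc n)) \<longlonglongrightarrow> xs" using xs by (rule LIMSEQ_Suc)
    ultimately have "T \<psi> = xs" using LIMSEQ_unique by blast
    then show "\<exists>\<phi>' \<in> Kc a b. (\<lambda>n. supD a b (\<phi>s n) \<phi>') \<longlonglongrightarrow> 0
               \<and> T \<phi>' = \<phi>' c \<and> \<alpha> (\<phi>' c) (T \<phi>') \<ge> 1"
      using \<psi>K conv A\<psi> \<psi>c by auto
  qed
  have P3: "\<exists>!\<phi>'. \<phi>' \<in> Kc a b \<and> T \<phi>' = \<phi>' c \<and> \<alpha> (\<phi>' c) (T \<phi>') \<ge> 1"
  proof (rule ex_ex1I)
    obtain \<phi>0 where p: "\<phi>0 \<in> Kc a b" "\<alpha> (\<phi>0 c) (T \<phi>0) \<ge> 1" using P1 by blast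
    define \<phi>s where "\<phi>s n = rec_nat \<phi>0 (\<lambda>_ f. cst a b (T f)) n" for n
    have "\<phi>s 0 = \<phi>0 \<and> (\<forall>n. \<phi>s n \<in> Kc a b \<and> \<phi>s (Suc n) c = T (\<phi>s n))"
    proof (intro conjI allI)
      fix n show "\<phi>s n \<in> Kc a b" by (cases n) (auto simp: \<phi>s_def p cst_Kc)
    qed (auto simp: \<phi>s_def cst_c[OF c])
    then show "\<exists>\<phi>'. \<phi>' \<in> Kc a b \<and> T \<phi>' = \<phi>' c \<and> \<alpha> (\<phi>' c) (T \<phi>') \<ge> 1"
      using P2 p by blast
  next
    fix f g
    assume f: "f \<in> Kc a b \<and> T f = f c \<and> \<alpha> (f c) (T f) \<ge> 1"
      and g: "g \<in> Kc a b \<and> T g = g c \<and> \<alpha> (g c) (T g) \<ge> 1"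
    have "dist (T f) (T g) \<le> k * supD a b f g"
      using cd[OF Kc_E0 Kc_E0, of f g] f g by blast
    then have "norm (f c - g c) \<le> k * norm (f c - g c)"
      using f g supD_Kc[of f a b g c] c by (simp add: dist_norm)
    then have "norm (f c - g c) = 0" using k
      by (metis mult_le_cancel_right1 norm_ge_zero not_le order_antisym)
    then have "f c = g c" by simp
    then show "f = g" using Kc_cst[of f a b c] Kc_cst[of g a b c] f g c by metis
  qed
  show ?thesis using P1 P2 P3 by blast
qed

end
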